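(* Let $\mathbb{H}$ be a finite-dimensional complex Hilbert space with $\dim\mathbb{H}\ge2$, let $k,n$ be positive integers, let $\alpha,\beta$ be complex numbers with $|\alpha|^2+|\beta|^2=1$ and $|\beta|\neq1$, and let $|\Phi\rangle\in\mathbb{H}^{\otimes n}$ be a fixed unit vector (independent of the input state; known or unknown). For a pure state $\rho_\psi$ on $\mathbb{H}$ let $|\Psi\rangle\propto\alpha|\psi\rangle^{\otimes n}+\beta|\Phi\rangle$. Then: (i) if $0<|\beta|<1$, there is no probabilistic quantum transformation $\mathcal{F}$ from $\mathbb{H}^{\otimes k}$ to $\mathbb{H}^{\otimes n}$ with $\mathcal{F}(\rho_\psi^{\otimes k})=\rho_\Psi$ for all pure states $\rho_\psi$ on $\mathbb{H}$; (ii) if $\beta=0$ and $n>k$, there is no probabilistic quantum transformation $\mathcal{F}$ from $\mathbb{H}^{\otimes k}$ to $\mathbb{H}^{\otimes n}$ with $\mathcal{F}(\rho_\psi^{\otimes k})=\rho_\psi^{\otimes n}$ for all pure states $\rho_\psi$; (iii) if $\beta=0$ and $n<k$, there is no unitary $U$ on $\mathbb{H}^{\otimes k}$ with $U\rho_\psi^{\otimes k}U^\dagger=\rho_\psi^{\otimes n}\otimes\rho_0^{\otimes(k-n)}$ for all pure states $\rho_\psi$, where $|0\rangle\in\mathbb{H}$ is a fixed unit vector.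
   Context: For a unit vector $|\psi\rangle$, $\rho_\psi=|\psi\rangle\langle\psi|$; $|\Psi\rangle\propto|\chi\rangle$ means $|\Psi\rangle$ is the normalization of $|\chi\rangle$ up to a global phase. A probabilistic quantum transformation from $\mathbb{H}_1$ to $\mathbb{H}_2$ is a completely positive, trace-non-increasing linear map from operators on $\mathbb{H}_1$ to operators on $\mathbb{H}_2$; $\mathcal{F}(\rho)=\sigma$ for pure states means $\mathcal{F}(\rho)=p\sigma$ for some $p>0$. *)

theory Defs
  imports Complex_Main
begin

text \<open>A vector of a space with
orthonormal basis indexed by a finite set I is a function I -> complex (values
outside I are irrelevant); an operator is a kernel I -> I -> complex.\<close>

definition inner_on :: "'a set \<Rightarrow> ('a \<Rightarrow> complex) \<Rightarrow> ('a \<Rightarrow> complex) \<Rightarrow> complex" where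
  "inner_on I v w = (\<Sum>i\<in>I. cnj (v i) * w i)"

definition apply_op :: "'a set \<Rightarrow> ('a \<Rightarrow> 'a \<Rightarrow> complex) \<Rightarrow> ('a \<Rightarrow> complex) \<Rightarrow> ('a \<Rightarrow> complex)" where
  "apply_op I A v = (\<lambda>i. \<Sum>j\<in>I. A i j * v j)"

definition positive_op :: "'a set \<Rightarrow> ('a \<Rightarrow> 'a \<Rightarrow> complex) \<Rightarrow> bool" where
  "positive_op I A = (\<forall>v. inner_on I v (apply_op I A v) \<in> \<real> \<and>
                          0 \<le> Re (inner_on I v (apply_op I A v)))"

definition trace_on :: "'a set \<Rightarrow> ('a \<Rightarrow> 'a \<Rightarrow> complex) \<Rightarrow> complex" where
  "trace_on I A = (\<Sum>i\<in>I. A i i)"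

definition outer :: "('a \<Rightarrow> complex) \<Rightarrow> ('a \<Rightarrow> complex) \<Rightarrow> ('a \<Rightarrow> 'a \<Rightarrow> complex)" where
  "outer v w = (\<lambda>i j. v i * cnj (w j))"

definition unit_vec :: "'a set \<Rightarrow> ('a \<Rightarrow> complex) \<Rightarrow> bool" where
  "unit_vec I v = (inner_on I v v = 1)"

definition ops_eq_on :: "'a set \<Rightarrow> ('a \<Rightarrow> 'a \<Rightarrow> complex) \<Rightarrow> ('a \<Rightarrow> 'a \<Rightarrow> complex) \<Rightarrow> bool" where
  "ops_eq_on I A B = (\<forall>i\<in>I. \<forall>j\<in>I. A i j = B i j)"

text \<open>A linear map from operators on I1 to operators on I2, given by its coefficients:
  (lin_map I1 c A) a b = sum over i j in I1 of c a b i j * A i j.  Every linear map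
  between these finite-dimensional operator spaces has exactly one such representation.\<close>
definition lin_map :: "'a set \<Rightarrow> ('b \<Rightarrow> 'b \<Rightarrow> 'a \<Rightarrow> 'a \<Rightarrow> complex) \<Rightarrow>
    ('a \<Rightarrow> 'a \<Rightarrow> complex) \<Rightarrow> ('b \<Rightarrow> 'b \<Rightarrow> complex)" where
  "lin_map I1 c A = (\<lambda>a b. \<Sum>i\<in>I1. \<Sum>j\<in>I1. c a b i j * A i j)"

text \<open>The map id_m (x) F acting on operators on C^m (x) H1 (index set {..<m} x I1).\<close>
definition ext_map :: "nat \<Rightarrow> 'a set \<Rightarrow> ('b \<Rightarrow> 'b \<Rightarrow> 'a \<Rightarrow> 'a \<Rightarrow> complex) \<Rightarrow>
    (nat \<times> 'a \<Rightarrow> nat \<times> 'a \<Rightarrow> complex) \<Rightarrow> (nat \<times> 'b \<Rightarrow> nat \<times> 'b \<Rightarrow> complex)" where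
  "ext_map m I1 c X = (\<lambda>(p, a) (q, b). \<Sum>i\<in>I1. \<Sum>j\<in>I1. c a b i j * X (p, i) (q, j))"

definition completely_positive ::
    "'a set \<Rightarrow> 'b set \<Rightarrow> ('b \<Rightarrow> 'b \<Rightarrow> 'a \<Rightarrow> 'a \<Rightarrow> complex) \<Rightarrow> bool" where
  "completely_positive I1 I2 c =
     (\<forall>m::nat. \<forall>X. positive_op ({..<m} \<times> I1) X \<longrightarrow>
                  positive_op ({..<m} \<times> I2) (ext_map m I1 c X))"

definition trace_nonincreasing ::
    "'a set \<Rightarrow> 'b set \<Rightarrow> ('b \<Rightarrow> 'b \<Rightarrow> 'a \<Rightarrow> 'a \<Rightarrow> complex) \<Rightarrow> bool" where
  "trace_nonincreasing I1 I2 c =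
     (\<forall>\<rho>. positive_op I1 \<rho> \<longrightarrow> Re (trace_on I2 (lin_map I1 c \<rho>)) \<le> Re (trace_on I1 \<rho>))"

definition prob_transformation ::
    "'a set \<Rightarrow> 'b set \<Rightarrow> ('b \<Rightarrow> 'b \<Rightarrow> 'a \<Rightarrow> 'a \<Rightarrow> complex) \<Rightarrow> bool" where
  "prob_transformation I1 I2 c = (completely_positive I1 I2 c \<and> trace_nonincreasing I1 I2 c)"

text \<open>Tensor powers.  H = C^'d (basis indexed by the finite type 'd); H^(tensor n) has
  basis indexed by lists over 'd of length n.\<close>
definition tidx :: "nat \<Rightarrow> 'd list set" where
  "tidx n = {xs. length xs = n}"

definition vec_tpow :: "('d \<Rightarrow> complex) \<Rightarrow> ('d list \<Rightarrow> complex)" where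
  "vec_tpow v = (\<lambda>xs. prod_list (map v xs))"

definition op_tpow :: "('d \<Rightarrow> 'd \<Rightarrow> complex) \<Rightarrow> ('d list \<Rightarrow> 'd list \<Rightarrow> complex)" where
  "op_tpow A = (\<lambda>xs ys. prod_list (map (\<lambda>(x, y). A x y) (zip xs ys)))"

text \<open>A (x) B for A on H^(tensor n) and B on H^(tensor m), as operator on H^(tensor (n+m)).\<close>
definition op_tensor :: "nat \<Rightarrow> ('d list \<Rightarrow> 'd list \<Rightarrow> complex) \<Rightarrow>
    ('d list \<Rightarrow> 'd list \<Rightarrow> complex) \<Rightarrow> ('d list \<Rightarrow> 'd list \<Rightarrow> complex)" where
  "op_tensor n A B = (\<lambda>xs ys. A (take n xs) (take n ys) * B (drop n xs) (drop n ys))"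

definition proj_norm :: "'a set \<Rightarrow> ('a \<Rightarrow> complex) \<Rightarrow> ('a \<Rightarrow> 'a \<Rightarrow> complex)" where
  "proj_norm I v = (\<lambda>i j. outer v v i j / inner_on I v v)"

definition unitary_on :: "'a set \<Rightarrow> ('a \<Rightarrow> 'a \<Rightarrow> complex) \<Rightarrow> bool" where
  "unitary_on I U = (\<forall>i\<in>I. \<forall>j\<in>I. (\<Sum>l\<in>I. cnj (U l i) * U l j) = (if i = j then 1 else 0))"

definition conj_op :: "'a set \<Rightarrow> ('a \<Rightarrow> 'a \<Rightarrow> complex) \<Rightarrow> ('a \<Rightarrow> 'a \<Rightarrow> complex) \<Rightarrow>
    ('a \<Rightarrow> 'a \<Rightarrow> complex)" where
  "conj_op I U A = (\<lambda>a b. \<Sum>i\<in>I. \<Sum>j\<in>I. U a i * A i j * cnj (U b j))"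

end

theory Submission
  imports Defs "HOL-Computational_Algebra.Polynomial"
begin


lemma finite_tidx: "finite (tidx k :: 'd::finite list set)"
proof -
  have "tidx k = {xs::'d list. set xs \<subseteq> UNIV \<and> length xs = k}" by (auto simp: tidx_def)
  thus ?thesis using finite_lists_length_eq[OF finite_UNIV] by simp
qed

lemma inner_self_nz:
  assumes "finite I" "i \<in> I" "v i \<noteq> 0"
  shows "inner_on I v v \<noteq> 0"
proof -
  have eq: "inner_on I v v = of_real (\<Sum>j\<in>I. (cmod (v j))\<^sup>2)"
    unfolding inner_on_def of_real_sum
    by (rule sum.cong[OF refl]) (metis complex_norm_square mult.commute)
  have "(cmod (v i))\<^sup>2 \<le> (\<Sum>j\<in>I. (cmod (v j))\<^sup>2)"
    using assms by (intro member_le_sum) auto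
  moreover have "(cmod (v i))\<^sup>2 > 0" using assms by simp
  ultimately have "(\<Sum>j\<in>I. (cmod (v j))\<^sup>2) \<noteq> 0" by linarith
  then show ?thesis unfolding eq by (simp del: of_real_sum)
qed

lemma two_elems:
  assumes "card (UNIV :: 'a::finite set) \<ge> 2"
  obtains a b :: "'a::finite" where "a \<noteq> b"
proof -
  have "\<not> (\<forall>a b::'a. a = b)"
  proof
    assume h: "\<forall>a b::'a. a = b"
    have "(UNIV::'a set) = {undefined}"
    proof (rule UNIV_eq_I)
      fix x :: 'a show "x \<in> {undefined}" using h by simp
    qed
    then have "card (UNIV::'a set) = 1" by (metis card.empty card_insert_disjoint empty_iff finite.emptyI One_nat_def)
    then show False using assms by simp
  qed
  then show ?thesis using that by blast
qed

lemma vec_tpow_zero: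
  assumes "length xs = n" "xs \<noteq> replicate n a" "\<And>x. x \<noteq> a \<Longrightarrow> \<psi> x = 0"
  shows "vec_tpow \<psi> xs = 0"
proof -
  obtain c where "c \<in> set xs" "c \<noteq> a"
    using assms(1,2) by (metis in_set_conv_nth nth_equalityI length_replicate nth_replicate)
  then show ?thesis using assms(3) unfolding vec_tpow_def
    by (simp add: prod_list_zero_iff) (metis image_eqI)
qed

lemma vec_tpow_rep: "vec_tpow \<psi> (replicate n a) = \<psi> a ^ n"
  by (simp add: vec_tpow_def)

lemma unit_basis: "unit_vec UNIV (\<lambda>x::'d::finite. if x = a then (1::complex) else 0)"
  unfolding unit_vec_def inner_on_def by (simp add: if_distrib cong: if_cong)

lemma cnj_cis_mult: "cnj (cis t) * cis t = 1"
  unfolding cis_cnj cis_mult by simp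

lemma part1:
  fixes k n :: nat and \<alpha> \<beta> :: complex
    and \<Phi> :: "'d::finite list \<Rightarrow> complex"
  assumes dim: "card (UNIV :: 'd set) \<ge> 2"
    and n: "n > 0"
    and ab: "(cmod \<alpha>)\<^sup>2 + (cmod \<beta>)\<^sup>2 = 1"
    and Phi: "unit_vec (tidx n) \<Phi>"
    and hb: "0 < cmod \<beta>" "cmod \<beta> < 1"
  shows "\<not> (\<exists>F. prob_transformation (tidx k) (tidx n) F \<and>
            (\<forall>\<psi> :: 'd \<Rightarrow> complex. unit_vec UNIV \<psi> \<longrightarrow>
               (let \<chi> = (\<lambda>xs. \<alpha> * vec_tpow \<psi> xs + \<beta> * \<Phi> xs) in
                inner_on (tidx n) \<chi> \<chi> \<noteq> 0 \<longrightarrow>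
                (\<exists>p::real. p > 0 \<and>
                   ops_eq_on (tidx n) (lin_map (tidx k) F (op_tpow (outer \<psi> \<psi>)))
                     (\<lambda>i j. of_real p * proj_norm (tidx n) \<chi> i j)))))"
proof
  assume "\<exists>F. prob_transformation (tidx k) (tidx n) F \<and>
            (\<forall>\<psi> :: 'd \<Rightarrow> complex. unit_vec UNIV \<psi> \<longrightarrow>
               (let \<chi> = (\<lambda>xs. \<alpha> * vec_tpow \<psi> xs + \<beta> * \<Phi> xs) in
                inner_on (tidx n) \<chi> \<chi> \<noteq> 0 \<longrightarrow>
                (\<exists>p::real. p > 0 \<and>
                   ops_eq_on (tidx n) (lin_map (tidx k) F (op_tpow (outer \<psi> \<psi>)))
                     (\<lambda>i j. of_real p * proj_norm (tidx n) \<chi> i j))))"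
  then obtain F where HF: "\<And>\<psi> :: 'd \<Rightarrow> complex. unit_vec UNIV \<psi> \<Longrightarrow>
               (let \<chi> = (\<lambda>xs. \<alpha> * vec_tpow \<psi> xs + \<beta> * \<Phi> xs) in
                inner_on (tidx n) \<chi> \<chi> \<noteq> 0 \<longrightarrow>
                (\<exists>p::real. p > 0 \<and>
                   ops_eq_on (tidx n) (lin_map (tidx k) F (op_tpow (outer \<psi> \<psi>)))
                     (\<lambda>i j. of_real p * proj_norm (tidx n) \<chi> i j)))" by blast
  obtain xs0 where xs0: "xs0 \<in> tidx n" "\<Phi> xs0 \<noteq> 0"
  proof -
    have "\<exists>xs\<in>tidx n. \<Phi> xs \<noteq> 0"
    proof (rule ccontr)
      assume "\<not> ?thesis"
      then have "inner_on (tidx n) \<Phi> \<Phi> = 0" unfolding inner_on_def by simp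
      then show False using Phi by (simp add: unit_vec_def)
    qed
    then show ?thesis using that by blast
  qed
  obtain a :: 'd where a: "xs0 \<noteq> replicate n a"
  proof -
    obtain a0 b0 :: 'd where "a0 \<noteq> b0" using two_elems[OF dim] by blast
    then have "replicate n a0 \<noteq> replicate n b0" using n by simp
    then show ?thesis using that by metis
  qed
  define r where "r = replicate n a"
  have r: "r \<in> tidx n" by (simp add: r_def tidx_def)
  have len0: "length xs0 = n" using xs0 by (simp add: tidx_def)
  define e where "e = (\<lambda>x::'d. if x = a then (1::complex) else 0)"
  define \<omega> where "\<omega> = cis (pi / real n)"
  define e2 where "e2 = (\<lambda>x. \<omega> * e x)"
  have ue: "unit_vec UNIV e" unfolding e_def by (rule unit_basis)
  have om: "cnj \<omega> * \<omega> = 1" by (simp add: \<omega>_def cnj_cis_mult)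
  have ue2: "unit_vec UNIV e2"
  proof -
    have eq: "\<And>i. cnj (\<omega> * e i) * (\<omega> * e i) = cnj (e i) * e i"
    proof -
      fix i
      have "cnj (\<omega> * e i) * (\<omega> * e i) = (cnj \<omega> * \<omega>) * (cnj (e i) * e i)"
        by (simp add: algebra_simps)
      then show "cnj (\<omega> * e i) * (\<omega> * e i) = cnj (e i) * e i" using om by simp
    qed
    have "(\<Sum>i\<in>UNIV. cnj (e2 i) * e2 i) = (\<Sum>i\<in>UNIV. cnj (e i) * e i)"
      unfolding e2_def by (rule sum.cong[OF refl]) (rule eq)
    then show ?thesis using ue unfolding unit_vec_def inner_on_def by simp
  qed
  have outer_eq: "outer e2 e2 = outer e e"
    unfolding outer_def e2_def
  proof (intro ext)
    fix i j show "\<omega> * e i * cnj (\<omega> * e j) = e i * cnj (e j)"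
      using om by (simp add: algebra_simps)
  qed
  have omn: "\<omega> ^ n = -1" using n by (simp add: \<omega>_def DeMoivre)
  define \<chi>1 where "\<chi>1 = (\<lambda>xs. \<alpha> * vec_tpow e xs + \<beta> * \<Phi> xs)"
  define \<chi>2 where "\<chi>2 = (\<lambda>xs. \<alpha> * vec_tpow e2 xs + \<beta> * \<Phi> xs)"
  define w where "w = \<beta> * \<Phi> xs0"
  have w: "w \<noteq> 0" using xs0 hb by (auto simp: w_def)
  have c1: "\<chi>1 xs0 = w" unfolding \<chi>1_def w_def
    using vec_tpow_zero[OF len0 a, of e] by (simp add: e_def)
  have c2: "\<chi>2 xs0 = w" unfolding \<chi>2_def w_def
    using vec_tpow_zero[OF len0 a, of e2] by (simp add: e_def e2_def)
  have r1: "\<chi>1 r = \<alpha> + \<beta> * \<Phi> r" unfolding \<chi>1_def r_def vec_tpow_rep by (simp add: e_def)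
  have r2: "\<chi>2 r = - \<alpha> + \<beta> * \<Phi> r" unfolding \<chi>2_def r_def vec_tpow_rep
    by (simp add: e_def e2_def omn)
  have nz1: "inner_on (tidx n) \<chi>1 \<chi>1 \<noteq> 0"
    using inner_self_nz[OF finite_tidx xs0(1), of \<chi>1] c1 w by simp
  have nz2: "inner_on (tidx n) \<chi>2 \<chi>2 \<noteq> 0"
    using inner_self_nz[OF finite_tidx xs0(1), of \<chi>2] c2 w by simp
  obtain p1 :: real where p1: "p1 > 0" "ops_eq_on (tidx n) (lin_map (tidx k) F (op_tpow (outer e e)))
                     (\<lambda>i j. of_real p1 * proj_norm (tidx n) \<chi>1 i j)"
    using HF[OF ue] nz1 unfolding Let_def \<chi>1_def by blast
  obtain p2 :: real where p2: "p2 > 0" "ops_eq_on (tidx n) (lin_map (tidx k) F (op_tpow (outer e e)))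
                     (\<lambda>i j. of_real p2 * proj_norm (tidx n) \<chi>2 i j)"
    using HF[OF ue2] nz2 unfolding Let_def \<chi>2_def outer_eq by blast
  have E: "\<And>i j. i \<in> tidx n \<Longrightarrow> j \<in> tidx n \<Longrightarrow>
     of_real p1 * proj_norm (tidx n) \<chi>1 i j = of_real p2 * proj_norm (tidx n) \<chi>2 i j"
    using p1(2) p2(2) unfolding ops_eq_on_def by metis
  define L1 where "L1 = of_real p1 / inner_on (tidx n) \<chi>1 \<chi>1"
  define L2 where "L2 = of_real p2 / inner_on (tidx n) \<chi>2 \<chi>2"
  have L1nz: "L1 \<noteq> 0" using p1 nz1 by (simp add: L1_def)
  have Ei: "\<And>i j. i \<in> tidx n \<Longrightarrow> j \<in> tidx n \<Longrightarrow>
     L1 * (\<chi>1 i * cnj (\<chi>1 j)) = L2 * (\<chi>2 i * cnj (\<chi>2 j))"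
    using E unfolding L1_def L2_def proj_norm_def outer_def by (simp add: field_simps)
  have "L1 * (w * cnj w) = L2 * (w * cnj w)" using Ei[OF xs0(1) xs0(1)] c1 c2 by simp
  then have L12: "L1 = L2" using w by simp
  have "L1 * (\<chi>1 r * cnj w) = L1 * (\<chi>2 r * cnj w)" using Ei[OF r xs0(1)] c1 c2 L12 by simp
  then have "\<chi>1 r = \<chi>2 r" using L1nz w by simp
  then have "\<alpha> = 0" using r1 r2 by simp
  moreover have "cmod \<beta> * cmod \<beta> < 1 * 1" by (rule mult_strict_mono) (use hb in auto)
  ultimately show False using ab by (simp add: power2_eq_square)
qed



definition mmul :: "'a set \<Rightarrow> ('a \<Rightarrow> 'a \<Rightarrow> complex) \<Rightarrow> ('a \<Rightarrow> 'a \<Rightarrow> complex) \<Rightarrow> ('a \<Rightarrow> 'a \<Rightarrow> complex)" where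
  "mmul I A B = (\<lambda>i j. \<Sum>l\<in>I. A i l * B l j)"

definition adj :: "('a \<Rightarrow> 'a \<Rightarrow> complex) \<Rightarrow> ('a \<Rightarrow> 'a \<Rightarrow> complex)" where
  "adj U = (\<lambda>i j. cnj (U j i))"

lemma mmul_assoc: "finite I \<Longrightarrow> mmul I (mmul I A B) C = mmul I A (mmul I B C)"
  unfolding mmul_def
  by (auto simp: fun_eq_iff sum_distrib_left sum_distrib_right mult.assoc intro: sum.swap)

lemma trace_comm: "trace_on I (mmul I A B) = trace_on I (mmul I B A)"
  unfolding trace_on_def mmul_def by (subst sum.swap) (simp add: mult.commute)

lemma conj_op_mmul: "conj_op I U A = mmul I (mmul I U A) (adj U)"
  unfolding conj_op_def mmul_def adj_def
  by (auto simp: fun_eq_iff sum_distrib_right intro: sum.swap)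

lemma unitary_mmul: "unitary_on I U \<Longrightarrow> i \<in> I \<Longrightarrow> j \<in> I \<Longrightarrow>
   mmul I (adj U) U i j = (if i = j then 1 else 0)"
  unfolding unitary_on_def mmul_def adj_def by simp

lemma mmul_id_left: assumes "finite I" "i \<in> I" "\<And>l. l \<in> I \<Longrightarrow> G i l = (if i = l then 1 else 0)"
  shows "mmul I G X i j = X i j"
proof -
  have "mmul I G X i j = (\<Sum>l\<in>I. (if i = l then X l j else 0))"
    unfolding mmul_def by (rule sum.cong) (auto simp: assms(3))
  also have "\<dots> = X i j" using assms by simp
  finally show ?thesis .
qed

lemma mmul_id_right: assumes "finite I" "j \<in> I" "\<And>l. l \<in> I \<Longrightarrow> G l j = (if l = j then 1 else 0)"
  shows "mmul I X G i j = X i j"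
proof -
  have "mmul I X G i j = (\<Sum>l\<in>I. (if l = j then X i l else 0))"
    unfolding mmul_def by (rule sum.cong) (auto simp: assms(3))
  also have "\<dots> = X i j" using assms by simp
  finally show ?thesis .
qed

lemma trace_mmul_cong_right: "(\<And>i j. i \<in> I \<Longrightarrow> j \<in> I \<Longrightarrow> B i j = B' i j) \<Longrightarrow>
   trace_on I (mmul I A B) = trace_on I (mmul I A B')"
  unfolding trace_on_def mmul_def by (intro sum.cong refl) auto

lemma trace_mmul_cong: "(\<And>i j. i \<in> I \<Longrightarrow> j \<in> I \<Longrightarrow> A i j = A' i j) \<Longrightarrow>
   (\<And>i j. i \<in> I \<Longrightarrow> j \<in> I \<Longrightarrow> B i j = B' i j) \<Longrightarrow>
   trace_on I (mmul I A B) = trace_on I (mmul I A' B')"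
  unfolding trace_on_def mmul_def by (intro sum.cong refl) auto

lemma trace_conj:
  assumes "finite I" "unitary_on I U"
  shows "trace_on I (mmul I (conj_op I U A) (conj_op I U B)) = trace_on I (mmul I A B)"
proof -
  let ?V = "adj U"
  have "trace_on I (mmul I (conj_op I U A) (conj_op I U B))
      = trace_on I (mmul I U (mmul I A (mmul I ?V (mmul I U (mmul I B ?V)))))"
    unfolding conj_op_mmul by (simp add: mmul_assoc assms(1))
  also have "\<dots> = trace_on I (mmul I (mmul I A (mmul I ?V (mmul I U (mmul I B ?V)))) U)"
    by (rule trace_comm)
  also have "\<dots> = trace_on I (mmul I A (mmul I (mmul I ?V U) (mmul I (mmul I B ?V) U)))"
    by (simp add: mmul_assoc assms(1))
  also have "\<dots> = trace_on I (mmul I A (mmul I (mmul I B ?V) U))"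
    by (rule trace_mmul_cong_right, rule mmul_id_left)
       (use assms unitary_mmul[OF assms(2)] in auto)
  also have "\<dots> = trace_on I (mmul I (mmul I A B) (mmul I ?V U))"
    by (simp add: mmul_assoc assms(1))
  also have "\<dots> = trace_on I (mmul I A B)"
    unfolding trace_on_def
    by (rule sum.cong[OF refl], rule mmul_id_right) (use assms unitary_mmul[OF assms(2)] in auto)
  finally show ?thesis .
qed

lemma trace_rank1:
  assumes "\<And>i j. i \<in> I \<Longrightarrow> j \<in> I \<Longrightarrow> A i j = f i * cnj (f j)"
    and "\<And>i j. i \<in> I \<Longrightarrow> j \<in> I \<Longrightarrow> B i j = g i * cnj (g j)"
  shows "trace_on I (mmul I A B) = (\<Sum>i\<in>I. f i * cnj (g i)) * cnj (\<Sum>i\<in>I. f i * cnj (g i))"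
proof -
  have "trace_on I (mmul I A B) = (\<Sum>i\<in>I. \<Sum>l\<in>I. (f i * cnj (g i)) * cnj (f l * cnj (g l)))"
    unfolding trace_on_def mmul_def
    by (intro sum.cong refl) (simp add: assms mult_ac)
  also have "\<dots> = (\<Sum>i\<in>I. f i * cnj (g i)) * cnj (\<Sum>i\<in>I. f i * cnj (g i))"
    by (simp add: sum_product cnj_sum)
  finally show ?thesis .
qed



lemma op_tpow_outer: "length xs = length ys \<Longrightarrow>
   op_tpow (outer \<psi> \<phi>) xs ys = vec_tpow \<psi> xs * cnj (vec_tpow \<phi> ys)"
proof (induction xs arbitrary: ys)
  case Nil then show ?case by (simp add: op_tpow_def vec_tpow_def)
next
  case (Cons x xs) then show ?case
    by (cases ys) (auto simp: op_tpow_def vec_tpow_def outer_def)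
qed

lemma vec_tpow_mult: "vec_tpow \<psi> xs * cnj (vec_tpow \<phi> xs) = prod_list (map (\<lambda>x. \<psi> x * cnj (\<phi> x)) xs)"
  by (induction xs) (auto simp: vec_tpow_def)

lemma tidx_Suc: "tidx (Suc k) = (\<lambda>(x,xs). x # xs) ` (UNIV \<times> tidx k)"
  unfolding tidx_def by (auto simp: image_iff length_Suc_conv)

lemma sum_tidx_pow: "(\<Sum>xs\<in>tidx k. prod_list (map (f::_\<Rightarrow>complex) xs)) = (\<Sum>x\<in>(UNIV::'d::finite set). f x) ^ k"
proof (induction k)
  case 0
  have "tidx 0 = {[] :: 'd list}" by (auto simp: tidx_def)
  then show ?case by simp
next
  case (Suc k)
  have inj: "inj_on (\<lambda>(x,xs). x # xs) (UNIV \<times> (tidx k :: 'd list set))"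
    by (auto simp: inj_on_def)
  have "(\<Sum>xs\<in>tidx (Suc k). prod_list (map f xs)) =
        (\<Sum>p\<in>UNIV \<times> (tidx k :: 'd list set). prod_list (map f ((\<lambda>(x,xs). x # xs) p)))"
    unfolding tidx_Suc by (rule sum.reindex[OF inj, unfolded comp_def])
  also have "\<dots> = (\<Sum>x\<in>UNIV. \<Sum>xs\<in>tidx k. f x * prod_list (map f xs))"
    unfolding sum.cartesian_product by (rule sum.cong) auto
  also have "\<dots> = (\<Sum>x\<in>UNIV. f x) * (\<Sum>xs\<in>tidx k. prod_list (map f xs))"
    by (rule sum_product[symmetric])
  finally show ?case using Suc by simp
qed

lemma sum_tidx_split:
  "(\<Sum>xs\<in>tidx (m + l). h (take m xs) (drop m xs)) = (\<Sum>ys\<in>tidx m. \<Sum>zs\<in>tidx l. h ys zs)"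
proof -
  have inj: "inj_on (\<lambda>(ys,zs). ys @ zs) (tidx m \<times> tidx l)"
    by (auto simp: inj_on_def tidx_def)
  have img: "(\<lambda>(ys,zs). ys @ zs) ` (tidx m \<times> tidx l) = tidx (m + l)"
  proof
    show "(\<lambda>(ys,zs). ys @ zs) ` (tidx m \<times> tidx l) \<subseteq> tidx (m + l)" by (auto simp: tidx_def)
    show "tidx (m + l) \<subseteq> (\<lambda>(ys,zs). ys @ zs) ` (tidx m \<times> tidx l)"
    proof
      fix xs assume "xs \<in> tidx (m + l)"
      then show "xs \<in> (\<lambda>(ys,zs). ys @ zs) ` (tidx m \<times> tidx l)"
        by (intro image_eqI[of _ _ "(take m xs, drop m xs)"]) (auto simp: tidx_def)
    qed
  qed
  have "(\<Sum>xs\<in>tidx (m + l). h (take m xs) (drop m xs)) =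
        (\<Sum>p\<in>tidx m \<times> tidx l. h (take m ((\<lambda>(ys,zs). ys @ zs) p)) (drop m ((\<lambda>(ys,zs). ys @ zs) p)))"
    unfolding img[symmetric] by (rule sum.reindex[OF inj, unfolded comp_def])
  also have "\<dots> = (\<Sum>p\<in>tidx m \<times> tidx l. h (fst p) (snd p))"
    by (rule sum.cong) (auto simp: tidx_def)
  also have "\<dots> = (\<Sum>ys\<in>tidx m. \<Sum>zs\<in>tidx l. h ys zs)"
    unfolding sum.cartesian_product by (simp add: case_prod_beta)
  finally show ?thesis .
qed



lemma sum_two: assumes "a \<noteq> b" "\<And>x. x \<noteq> a \<Longrightarrow> x \<noteq> b \<Longrightarrow> g x = 0"
  shows "(\<Sum>x\<in>(UNIV::'d::finite set). g x) = g a + (g b :: complex)"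
proof -
  have "(\<Sum>x\<in>UNIV. g x) = (\<Sum>x\<in>{a,b}. g x)"
    by (rule sum.mono_neutral_right) (use assms in auto)
  then show ?thesis using assms by simp
qed

lemma trace_tpow:
  assumes "\<And>i j. i \<in> tidx k \<Longrightarrow> j \<in> tidx k \<Longrightarrow> A i j = op_tpow (outer \<psi> \<psi>) i j"
  shows "trace_on (tidx k) (mmul (tidx k) A (op_tpow (outer \<phi> \<phi>))) =
     (\<Sum>x\<in>(UNIV::'d::finite set). \<psi> x * cnj (\<phi> x)) ^ k * cnj ((\<Sum>x\<in>UNIV. \<psi> x * cnj (\<phi> x)) ^ k)"
proof -
  have "trace_on (tidx k) (mmul (tidx k) A (op_tpow (outer \<phi> \<phi>))) =
     (\<Sum>i\<in>tidx k. vec_tpow \<psi> i * cnj (vec_tpow \<phi> i)) * cnj (\<Sum>i\<in>tidx k. vec_tpow \<psi> i * cnj (vec_tpow \<phi> i))"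
    by (rule trace_rank1) (auto simp: assms op_tpow_outer tidx_def)
  also have "(\<Sum>i\<in>tidx k. vec_tpow \<psi> i * cnj (vec_tpow \<phi> i)) = (\<Sum>x\<in>UNIV. \<psi> x * cnj (\<phi> x)) ^ k"
    unfolding vec_tpow_mult by (rule sum_tidx_pow)
  finally show ?thesis .
qed

lemma trace_tens:
  assumes nk: "n \<le> k"
  shows "trace_on (tidx k) (mmul (tidx k) (op_tensor n (op_tpow (outer \<psi> \<psi>)) (op_tpow (outer e0 e0)))
                                         (op_tensor n (op_tpow (outer \<phi> \<phi>)) (op_tpow (outer e0 e0)))) =
     ((\<Sum>x\<in>(UNIV::'d::finite set). \<psi> x * cnj (\<phi> x)) ^ n * (\<Sum>x\<in>UNIV. e0 x * cnj (e0 x)) ^ (k - n)) *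
     cnj ((\<Sum>x\<in>UNIV. \<psi> x * cnj (\<phi> x)) ^ n * (\<Sum>x\<in>UNIV. e0 x * cnj (e0 x)) ^ (k - n))"
proof -
  define W where "W = (\<lambda>v xs. vec_tpow v (take n xs) * vec_tpow e0 (drop n xs :: 'd list))"
  have T: "\<And>v xs ys. xs \<in> tidx k \<Longrightarrow> ys \<in> tidx k \<Longrightarrow>
      op_tensor n (op_tpow (outer v v)) (op_tpow (outer e0 e0)) xs ys = W v xs * cnj (W v ys)"
    unfolding op_tensor_def W_def
    by (subst op_tpow_outer, simp add: tidx_def)+ (simp add: mult_ac)
  have "trace_on (tidx k) (mmul (tidx k) (op_tensor n (op_tpow (outer \<psi> \<psi>)) (op_tpow (outer e0 e0)))
                                         (op_tensor n (op_tpow (outer \<phi> \<phi>)) (op_tpow (outer e0 e0)))) =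
     (\<Sum>i\<in>tidx k. W \<psi> i * cnj (W \<phi> i)) * cnj (\<Sum>i\<in>tidx k. W \<psi> i * cnj (W \<phi> i))"
    by (rule trace_rank1) (auto simp: T)
  also have "(\<Sum>i\<in>tidx k. W \<psi> i * cnj (W \<phi> i)) =
      (\<Sum>i\<in>tidx (n + (k - n)). (vec_tpow \<psi> (take n i) * cnj (vec_tpow \<phi> (take n i))) *
           (vec_tpow e0 (drop n i) * cnj (vec_tpow e0 (drop n i))))"
    using nk by (simp add: W_def mult_ac)
  also have "\<dots> = (\<Sum>ys\<in>tidx n. \<Sum>zs\<in>tidx (k - n). (vec_tpow \<psi> ys * cnj (vec_tpow \<phi> ys)) *
           (vec_tpow e0 zs * cnj (vec_tpow e0 zs)))"
    by (rule sum_tidx_split)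
  also have "\<dots> = (\<Sum>ys\<in>tidx n. vec_tpow \<psi> ys * cnj (vec_tpow \<phi> ys)) *
        (\<Sum>zs\<in>tidx (k - n). vec_tpow e0 zs * cnj (vec_tpow e0 zs))"
    by (rule sum_product[symmetric])
  also have "\<dots> = (\<Sum>x\<in>(UNIV::'d::finite set). \<psi> x * cnj (\<phi> x)) ^ n * (\<Sum>x\<in>UNIV. e0 x * cnj (e0 x)) ^ (k - n)"
    unfolding vec_tpow_mult sum_tidx_pow ..
  finally show ?thesis .
qed

lemma part3:
  fixes k n :: nat
  assumes dim: "card (UNIV :: 'd::finite set) \<ge> 2"
    and nk: "n < k" and ue0: "unit_vec UNIV (e0 :: 'd \<Rightarrow> complex)"
  shows "\<not> (\<exists>U. unitary_on (tidx k) U \<and>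
            (\<forall>\<psi> :: 'd \<Rightarrow> complex. unit_vec UNIV \<psi> \<longrightarrow>
               ops_eq_on (tidx k) (conj_op (tidx k) U (op_tpow (outer \<psi> \<psi>)))
                 (op_tensor n (op_tpow (outer \<psi> \<psi>)) (op_tpow (outer e0 e0)))))"
proof
  assume "\<exists>U. unitary_on (tidx k) U \<and>
            (\<forall>\<psi> :: 'd \<Rightarrow> complex. unit_vec UNIV \<psi> \<longrightarrow>
               ops_eq_on (tidx k) (conj_op (tidx k) U (op_tpow (outer \<psi> \<psi>)))
                 (op_tensor n (op_tpow (outer \<psi> \<psi>)) (op_tpow (outer e0 e0))))"
  then obtain U where U: "unitary_on (tidx k) U" and
    HU: "\<And>\<psi> :: 'd \<Rightarrow> complex. unit_vec UNIV \<psi> \<Longrightarrow>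
               ops_eq_on (tidx k) (conj_op (tidx k) U (op_tpow (outer \<psi> \<psi>)))
                 (op_tensor n (op_tpow (outer \<psi> \<psi>)) (op_tpow (outer e0 e0)))" by blast
  obtain a b :: 'd where ab: "a \<noteq> b" using two_elems[OF dim] by blast
  define \<psi> where "\<psi> = (\<lambda>x::'d. if x = a then (1::complex) else 0)"
  define \<phi> where "\<phi> = (\<lambda>x::'d. if x = a then (3/5::complex) else if x = b then 4/5 else 0)"
  have u1: "unit_vec UNIV \<psi>" unfolding \<psi>_def by (rule unit_basis)
  have u2: "unit_vec UNIV \<phi>" unfolding unit_vec_def inner_on_def
    by (subst sum_two[OF ab]) (auto simp: \<phi>_def ab ab[symmetric])
  have s: "(\<Sum>x\<in>UNIV. \<psi> x * cnj (\<phi> x)) = of_real (3/5)"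
    by (simp add: \<psi>_def \<phi>_def if_distrib cong: if_cong)
  have t: "(\<Sum>x\<in>UNIV. e0 x * cnj (e0 x)) = 1"
    using ue0 unfolding unit_vec_def inner_on_def by (simp add: mult.commute)
  let ?I = "tidx k :: 'd list set"
  have "trace_on ?I (mmul ?I (conj_op ?I U (op_tpow (outer \<psi> \<psi>))) (conj_op ?I U (op_tpow (outer \<phi> \<phi>))))
      = trace_on ?I (mmul ?I (op_tpow (outer \<psi> \<psi>)) (op_tpow (outer \<phi> \<phi>)))"
    by (rule trace_conj[OF finite_tidx U])
  also have "\<dots> = of_real ((3/5) ^ k * (3/5) ^ k)"
    by (subst trace_tpow[of k _ \<psi>]) (simp_all add: s)
  finally have L: "trace_on ?I (mmul ?I (conj_op ?I U (op_tpow (outer \<psi> \<psi>))) (conj_op ?I U (op_tpow (outer \<phi> \<phi>))))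
      = of_real ((3/5) ^ k * (3/5) ^ k)" .
  have "trace_on ?I (mmul ?I (conj_op ?I U (op_tpow (outer \<psi> \<psi>))) (conj_op ?I U (op_tpow (outer \<phi> \<phi>))))
      = trace_on ?I (mmul ?I (op_tensor n (op_tpow (outer \<psi> \<psi>)) (op_tpow (outer e0 e0)))
                                         (op_tensor n (op_tpow (outer \<phi> \<phi>)) (op_tpow (outer e0 e0))))"
    by (rule trace_mmul_cong) (use HU[OF u1] HU[OF u2] in \<open>auto simp: ops_eq_on_def\<close>)
  also have "\<dots> = of_real ((3/5) ^ n * (3/5) ^ n)"
    using nk by (subst trace_tens) (simp_all add: s t)
  finally have R: "trace_on ?I (mmul ?I (conj_op ?I U (op_tpow (outer \<psi> \<psi>))) (conj_op ?I U (op_tpow (outer \<phi> \<phi>))))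
      = of_real ((3/5) ^ n * (3/5) ^ n)" .
  from L R have "complex_of_real ((3/5::real) ^ k * (3/5) ^ k) = of_real ((3/5) ^ n * (3/5) ^ n)"
    by (metis (no_types))
  then have "(3/5::real) ^ k * (3/5) ^ k = (3/5) ^ n * (3/5) ^ n" by (simp only: of_real_eq_iff)
  moreover have "(3/5::real) ^ k < (3/5) ^ n" using nk by (intro power_strict_decreasing) auto
  moreover have "(3/5::real) ^ k * (3/5) ^ k < (3/5) ^ n * (3/5) ^ n"
    using calculation(2) by (intro mult_strict_mono) auto
  ultimately show False by simp
qed



lemma vec_tpow_scale: "vec_tpow (\<lambda>d. c * v d) xs = c ^ length xs * vec_tpow v xs"
  by (induction xs) (auto simp: vec_tpow_def)

lemma op_tpow_scale: "length xs = length ys \<Longrightarrow>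
  op_tpow (outer (\<lambda>d. c * v d) (\<lambda>d. c * v d)) xs ys = (c * cnj c) ^ length xs * op_tpow (outer v v) xs ys"
  by (simp add: op_tpow_outer vec_tpow_scale power_mult_distrib mult_ac)

lemma lin_map_scale: "(\<And>i j. i \<in> I \<Longrightarrow> j \<in> I \<Longrightarrow> A i j = c * B i j) \<Longrightarrow>
   lin_map I F A p q = c * lin_map I F B p q"
  unfolding lin_map_def by (simp add: sum_distrib_left mult_ac)

lemma poly_prod_list_map: "poly (prod_list (map g l)) z = prod_list (map (\<lambda>u. poly (g u) z) l)"
  by (induction l) auto

lemma sum_list_le: "(\<And>u. u \<in> set l \<Longrightarrow> g u \<le> (c::nat)) \<Longrightarrow> sum_list (map g l) \<le> c * length l"
  by (induction l) (auto simp: add_mono)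

lemma part2:
  fixes k n :: nat
  assumes dim: "card (UNIV :: 'd::finite set) \<ge> 2"
    and nk: "n > k"
  shows "\<not> (\<exists>F. prob_transformation (tidx k) (tidx n) F \<and>
            (\<forall>\<psi> :: 'd \<Rightarrow> complex. unit_vec UNIV \<psi> \<longrightarrow>
                (\<exists>p::real. p > 0 \<and>
                   ops_eq_on (tidx n) (lin_map (tidx k) F (op_tpow (outer \<psi> \<psi>)))
                     (\<lambda>i j. of_real p * op_tpow (outer \<psi> \<psi>) i j))))"
proof
  assume "\<exists>F. prob_transformation (tidx k) (tidx n) F \<and>
            (\<forall>\<psi> :: 'd \<Rightarrow> complex. unit_vec UNIV \<psi> \<longrightarrow>
                (\<exists>p::real. p > 0 \<and>
                   ops_eq_on (tidx n) (lin_map (tidx k) F (op_tpow (outer \<psi> \<psi>)))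
                     (\<lambda>i j. of_real p * op_tpow (outer \<psi> \<psi>) i j)))"
  then obtain F where HF: "\<And>\<psi> :: 'd \<Rightarrow> complex. unit_vec UNIV \<psi> \<Longrightarrow>
                (\<exists>p::real. p > 0 \<and>
                   ops_eq_on (tidx n) (lin_map (tidx k) F (op_tpow (outer \<psi> \<psi>)))
                     (\<lambda>i j. of_real p * op_tpow (outer \<psi> \<psi>) i j))" by blast
  obtain a b :: 'd where ab: "a \<noteq> b" using two_elems[OF dim] by blast
  define \<phi> where "\<phi> = (\<lambda>(x::real) (d::'d). if d = a then (1::complex) else if d = b then of_real x else 0)"
  define f where "f = (\<lambda>x r. lin_map (tidx k) F (op_tpow (outer (\<phi> x) (\<phi> x))) r r)"
  define ra where "ra = replicate n a"
  define rb where "rb = replicate n b"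
  have ra: "ra \<in> tidx n" and rb: "rb \<in> tidx n" by (simp_all add: ra_def rb_def tidx_def)
  have key: "f x rb = f x ra * of_real x ^ (2 * n) \<and> f x ra \<noteq> 0" for x
  proof -
    define sc where "sc = 1 / sqrt (1 + x\<^sup>2)"
    define c where "c = complex_of_real sc"
    define \<psi> where "\<psi> = (\<lambda>d. c * \<phi> x d)"
    have pos: "1 + x\<^sup>2 > 0" by (metis add_pos_nonneg zero_less_one zero_le_power2)
    have sc2: "sc\<^sup>2 * (1 + x\<^sup>2) = 1"
      unfolding sc_def using pos by (simp add: power_divide)
    have cc: "c * cnj c = of_real (sc\<^sup>2)" by (simp add: c_def power2_eq_square)
    have sc_pos: "sc > 0" unfolding sc_def using pos by simp
    have u: "unit_vec UNIV \<psi>"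
    proof -
      have "inner_on UNIV \<psi> \<psi> = of_real (sc\<^sup>2 * (1 + x\<^sup>2))"
        unfolding inner_on_def
        by (subst sum_two[OF ab]) (auto simp: \<psi>_def \<phi>_def c_def ab ab[symmetric] algebra_simps power2_eq_square)
      then show ?thesis using sc2 by (simp add: unit_vec_def)
    qed
    obtain p :: real where p: "p > 0" and
      E: "ops_eq_on (tidx n) (lin_map (tidx k) F (op_tpow (outer \<psi> \<psi>)))
                     (\<lambda>i j. of_real p * op_tpow (outer \<psi> \<psi>) i j)"
      using HF[OF u] by blast
    have M: "lin_map (tidx k) F (op_tpow (outer \<psi> \<psi>)) r r = of_real (sc\<^sup>2) ^ k * f x r" for r
      unfolding f_def
      by (rule lin_map_scale) (auto simp: \<psi>_def op_tpow_scale tidx_def cc)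
    have N: "op_tpow (outer \<psi> \<psi>) r r = of_real (sc\<^sup>2) ^ n * op_tpow (outer (\<phi> x) (\<phi> x)) r r"
      if "r \<in> tidx n" for r
      using that by (auto simp: \<psi>_def op_tpow_scale tidx_def cc)
    have Na: "op_tpow (outer (\<phi> x) (\<phi> x)) ra ra = 1"
      by (simp add: op_tpow_outer ra_def vec_tpow_rep \<phi>_def)
    have Nb: "op_tpow (outer (\<phi> x) (\<phi> x)) rb rb = of_real x ^ (2 * n)"
      by (simp add: op_tpow_outer rb_def vec_tpow_rep \<phi>_def ab[symmetric] power_mult power2_eq_square
          flip: power_mult_distrib)
    define C where "C = (of_real (sc\<^sup>2) :: complex) ^ k"
    have Cnz: "C \<noteq> 0" using sc_pos by (simp add: C_def)
    have fa: "C * f x ra = of_real p * of_real (sc\<^sup>2) ^ n"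
      using E ra M[of ra] N[OF ra] Na unfolding ops_eq_on_def C_def by auto
    have fb: "C * f x rb = of_real p * of_real (sc\<^sup>2) ^ n * of_real x ^ (2 * n)"
      using E rb M[of rb] N[OF rb] Nb unfolding ops_eq_on_def C_def by (auto simp: mult.assoc)
    have "C * f x rb = C * (f x ra * of_real x ^ (2 * n))" using fa fb by simp
    then have "f x rb = f x ra * of_real x ^ (2 * n)" using Cnz by simp
    moreover have "f x ra \<noteq> 0" using fa p sc_pos by auto
    ultimately show ?thesis by blast
  qed
  define \<phi>p where "\<phi>p = (\<lambda>d::'d. if d = a then (1::complex poly) else if d = b then [:0, 1:] else 0)"
  define Q where "Q = (\<lambda>i j :: 'd list. prod_list (map (\<lambda>(u, v). \<phi>p u * \<phi>p v) (zip i j)))"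
  define P where "P = (\<lambda>r. \<Sum>i\<in>tidx k. \<Sum>j\<in>tidx k. smult (F r r i j) (Q i j))"
  have phi_poly: "\<phi> x u * cnj (\<phi> x v) = poly (\<phi>p u * \<phi>p v) (of_real x)" for x u v
    by (simp add: \<phi>_def \<phi>p_def)
  have Qpoly: "op_tpow (outer (\<phi> x) (\<phi> x)) i j = poly (Q i j) (of_real x)" for x i j
    unfolding op_tpow_def Q_def poly_prod_list_map outer_def
    by (rule arg_cong[where f = prod_list], rule map_cong) (auto simp: phi_poly)
  have Qdeg: "degree (Q i j) \<le> 2 * k" if "i \<in> tidx k" for i j
  proof -
    have "degree (Q i j) \<le> sum_list (map degree (map (\<lambda>(u, v). \<phi>p u * \<phi>p v) (zip i j)))"
      unfolding Q_def by (rule degree_prod_list_le)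
    also have "\<dots> = sum_list (map (\<lambda>uv. degree ((\<lambda>(u, v). \<phi>p u * \<phi>p v) uv)) (zip i j))"
      by (simp add: comp_def)
    also have "\<dots> \<le> 2 * length (zip i j)"
    proof (rule sum_list_le)
      fix uv assume "uv \<in> set (zip i j)"
      obtain u v where uv: "uv = (u, v)" by fastforce
      have du: "degree (\<phi>p u) \<le> 1" and dv: "degree (\<phi>p v) \<le> 1"
        by (auto simp: \<phi>p_def)
      have "degree (\<phi>p u * \<phi>p v) \<le> degree (\<phi>p u) + degree (\<phi>p v)" by (rule degree_mult_le)
      then show "degree ((\<lambda>(u, v). \<phi>p u * \<phi>p v) uv) \<le> 2" using du dv uv by simp
    qed
    also have "\<dots> \<le> 2 * k" using that by (simp add: tidx_def)
    finally show ?thesis .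
  qed
  have Ppoly: "poly (P r) (of_real x) = f x r" for r x
    unfolding P_def f_def lin_map_def poly_sum poly_smult Qpoly ..
  have Pdeg: "degree (P r) \<le> 2 * k" for r
    unfolding P_def
    by (intro degree_sum_le finite_tidx order.trans[OF degree_smult_le] Qdeg)
  define D where "D = P rb - P ra * monom 1 (2 * n)"
  have Droot: "poly D (of_real x) = 0" for x
    using key[of x] by (simp add: D_def Ppoly poly_monom)
  have "D = 0"
  proof (rule ccontr)
    assume "D \<noteq> 0"
    then have fin: "finite {z. poly D z = 0}" by (rule poly_roots_finite)
    have "range complex_of_real \<subseteq> {z. poly D z = 0}" using Droot by auto
    then have "finite (range complex_of_real)" using fin finite_subset by blast
    then have "finite (UNIV :: real set)" using finite_imageD inj_of_real by blast
    then show False using infinite_UNIV_char_0 by blast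
  qed
  then have PE: "P rb = P ra * monom 1 (2 * n)" by (simp add: D_def)
  have "P ra \<noteq> 0"
  proof
    assume "P ra = 0"
    then have "f 0 ra = 0" using Ppoly[of ra 0] by simp
    then show False using key[of 0] by simp
  qed
  then have "degree (P rb) = degree (P ra) + 2 * n"
    unfolding PE by (simp add: degree_mult_eq degree_monom_eq)
  then show False using Pdeg[of rb] nk by simp
qed


theorem theorem2:
  fixes k n :: nat and \<alpha> \<beta> :: complex
    and \<Phi> :: "'d::finite list \<Rightarrow> complex"
  assumes dim: "card (UNIV :: 'd set) \<ge> 2"
    and k: "k > 0" and n: "n > 0"
    and ab: "(cmod \<alpha>)\<^sup>2 + (cmod \<beta>)\<^sup>2 = 1" and b1: "cmod \<beta> \<noteq> 1"
    and Phi: "unit_vec (tidx n) \<Phi>"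
  shows
   "(0 < cmod \<beta> \<and> cmod \<beta> < 1 \<longrightarrow>
      \<not> (\<exists>F. prob_transformation (tidx k) (tidx n) F \<and>
            (\<forall>\<psi> :: 'd \<Rightarrow> complex. unit_vec UNIV \<psi> \<longrightarrow>
               (let \<chi> = (\<lambda>xs. \<alpha> * vec_tpow \<psi> xs + \<beta> * \<Phi> xs) in
                inner_on (tidx n) \<chi> \<chi> \<noteq> 0 \<longrightarrow>
                (\<exists>p::real. p > 0 \<and>
                   ops_eq_on (tidx n) (lin_map (tidx k) F (op_tpow (outer \<psi> \<psi>)))
                     (\<lambda>i j. of_real p * proj_norm (tidx n) \<chi> i j))))))
    \<and> (\<beta> = 0 \<and> n > k \<longrightarrow>
      \<not> (\<exists>F. prob_transformation (tidx k) (tidx n) F \<and>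
            (\<forall>\<psi> :: 'd \<Rightarrow> complex. unit_vec UNIV \<psi> \<longrightarrow>
                (\<exists>p::real. p > 0 \<and>
                   ops_eq_on (tidx n) (lin_map (tidx k) F (op_tpow (outer \<psi> \<psi>)))
                     (\<lambda>i j. of_real p * op_tpow (outer \<psi> \<psi>) i j)))))
    \<and> (\<beta> = 0 \<and> n < k \<longrightarrow>
      (\<forall>e0 :: 'd \<Rightarrow> complex. unit_vec UNIV e0 \<longrightarrow>
        \<not> (\<exists>U. unitary_on (tidx k) U \<and>
            (\<forall>\<psi> :: 'd \<Rightarrow> complex. unit_vec UNIV \<psi> \<longrightarrow>
               ops_eq_on (tidx k) (conj_op (tidx k) U (op_tpow (outer \<psi> \<psi>)))
                 (op_tensor n (op_tpow (outer \<psi> \<psi>)) (op_tpow (outer e0 e0)))))))"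
  proof (intro conjI impI)
  assume "0 < cmod \<beta> \<and> cmod \<beta> < 1"
  then show "\<not> (\<exists>F. prob_transformation (tidx k) (tidx n) F \<and>
            (\<forall>\<psi> :: 'd \<Rightarrow> complex. unit_vec UNIV \<psi> \<longrightarrow>
               (let \<chi> = (\<lambda>xs. \<alpha> * vec_tpow \<psi> xs + \<beta> * \<Phi> xs) in
                inner_on (tidx n) \<chi> \<chi> \<noteq> 0 \<longrightarrow>
                (\<exists>p::real. p > 0 \<and>
                   ops_eq_on (tidx n) (lin_map (tidx k) F (op_tpow (outer \<psi> \<psi>)))
                     (\<lambda>i j. of_real p * proj_norm (tidx n) \<chi> i j)))))"
    using part1[OF dim n ab Phi] by blast
next
  assume "\<beta> = 0 \<and> n > k"
  then show "\<not> (\<exists>F. prob_transformation (tidx k) (tidx n) F \<and>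
            (\<forall>\<psi> :: 'd \<Rightarrow> complex. unit_vec UNIV \<psi> \<longrightarrow>
                (\<exists>p::real. p > 0 \<and>
                   ops_eq_on (tidx n) (lin_map (tidx k) F (op_tpow (outer \<psi> \<psi>)))
                     (\<lambda>i j. of_real p * op_tpow (outer \<psi> \<psi>) i j))))"
    using part2[OF dim] by blast
next
  assume "\<beta> = 0 \<and> n < k"
  then show "\<forall>e0 :: 'd \<Rightarrow> complex. unit_vec UNIV e0 \<longrightarrow>
        \<not> (\<exists>U. unitary_on (tidx k) U \<and>
            (\<forall>\<psi> :: 'd \<Rightarrow> complex. unit_vec UNIV \<psi> \<longrightarrow>
               ops_eq_on (tidx k) (conj_op (tidx k) U (op_tpow (outer \<psi> \<psi>)))
                 (op_tensor n (op_tpow (outer \<psi> \<psi>)) (op_tpow (outer e0 e0)))))"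
    using part3[OF dim] by blast
qed

end
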